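(* Let $\Sigma$ be a fan in $\Lambda_{\mathbb Q}$ with support $|\Sigma|$ contained in the positive Weyl chamber $\Lambda^+_{\mathbb Q}$. If $W\Sigma$ has convex support, then for every $x\in|\Sigma|$ and every face $F$ of $\Lambda^+_{\mathbb Q}$, the orthogonal projection of $x$ onto the linear span of $F$ is also contained in $|\Sigma|$.
   Context: $G$ is a split reductive group with maximal torus $T$, cocharacter lattice $\Lambda$, Weyl group $W$ acting on $\Lambda_{\mathbb Q}$, and positive Weyl chamber $\Lambda^+_{\mathbb Q}$. Orthogonal projection is taken with respect to a $W$-invariant inner product (e.g. for a wall, the projection onto the hyperplane annihilated by a simple root $\alpha_i$ is $x\mapsto x-\frac{\alpha_i\cdot x}{2}\alpha_i^\vee$). $W\Sigma$ is the fan of cones $w\sigma$, $w\in W$, $\sigma\in\Sigma$. *)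

theory Defs
  imports "HOL-Analysis.Analysis"
begin

text \<open>The cocharacter lattice is \<Lambda> = Z^'n, realised as the integer points
of real^'n; \<Lambda>_Q is the set of rational points. The character lattice X is identified
with Z^'n as well, the perfect pairing X x \<Lambda> -> Z being the dot product.
Roots are elements of X, coroots elements of \<Lambda>.\<close>

definition Qvecs :: "(real ^ 'n) set" where
  "Qvecs = {x. \<forall>i. x $ i \<in> \<rat>}"

definition Zvecs :: "(real ^ 'n) set" where
  "Zvecs = {x. \<forall>i. x $ i \<in> \<int>}"

definition refl :: "real ^ 'n \<Rightarrow> real ^ 'n \<Rightarrow> real ^ 'n \<Rightarrow> real ^ 'n" where
  "refl a av x = x - (a \<bullet> x) *\<^sub>R av"

definition reduced_root_datum :: "(real ^ 'n) set \<Rightarrow> (real ^ 'n \<Rightarrow> real ^ 'n) \<Rightarrow> bool" where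
  "reduced_root_datum Phi cor \<longleftrightarrow>
     finite Phi \<and> Phi \<subseteq> Zvecs \<and> cor ` Phi \<subseteq> Zvecs \<and> inj_on cor Phi \<and>
     (\<forall>a\<in>Phi. a \<bullet> cor a = 2) \<and>
     (\<forall>a\<in>Phi. \<forall>b\<in>Phi. b - (b \<bullet> cor a) *\<^sub>R a \<in> Phi) \<and>
     (\<forall>a\<in>Phi. \<forall>b\<in>Phi. cor b - (a \<bullet> cor b) *\<^sub>R cor a \<in> cor ` Phi) \<and>
     (\<forall>a\<in>Phi. \<forall>c. c *\<^sub>R a \<in> Phi \<longrightarrow> c = 1 \<or> c = -1)"

definition is_base :: "(real ^ 'n) set \<Rightarrow> (real ^ 'n) set \<Rightarrow> bool" where
  "is_base Phi Delta \<longleftrightarrow> Delta \<subseteq> Phi \<and> independent Delta \<and>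
     (\<forall>a\<in>Phi. \<exists>c :: real ^ 'n \<Rightarrow> int. a = (\<Sum>d\<in>Delta. of_int (c d) *\<^sub>R d) \<and>
        ((\<forall>d\<in>Delta. c d \<ge> 0) \<or> (\<forall>d\<in>Delta. c d \<le> 0)))"

definition weyl_group :: "(real ^ 'n) set \<Rightarrow> (real ^ 'n \<Rightarrow> real ^ 'n) \<Rightarrow> (real ^ 'n \<Rightarrow> real ^ 'n) set" where
  "weyl_group Phi cor =
     {foldr (\<circ>) (map (\<lambda>a. refl a (cor a)) l) id | l. set l \<subseteq> Phi}"

definition pos_chamber :: "(real ^ 'n) set \<Rightarrow> (real ^ 'n) set" where
  "pos_chamber Delta = {x \<in> Qvecs. \<forall>d\<in>Delta. d \<bullet> x \<ge> 0}"

definition Q_inner_product :: "(real ^ 'n \<Rightarrow> real ^ 'n \<Rightarrow> real) \<Rightarrow> bool" where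
  "Q_inner_product B \<longleftrightarrow>
     (\<forall>x\<in>Qvecs. \<forall>y\<in>Qvecs. B x y = B y x \<and> B x y \<in> \<rat>) \<and>
     (\<forall>x\<in>Qvecs. \<forall>y\<in>Qvecs. \<forall>z\<in>Qvecs. B (x + y) z = B x z + B y z) \<and>
     (\<forall>c\<in>\<rat>. \<forall>x\<in>Qvecs. \<forall>y\<in>Qvecs. B (c *\<^sub>R x) y = c * B x y) \<and>
     (\<forall>x\<in>Qvecs. x \<noteq> 0 \<longrightarrow> B x x > 0)"

definition W_invariant :: "(real ^ 'n \<Rightarrow> real ^ 'n) set \<Rightarrow> (real ^ 'n \<Rightarrow> real ^ 'n \<Rightarrow> real) \<Rightarrow> bool" where
  "W_invariant W B \<longleftrightarrow> (\<forall>w\<in>W. \<forall>x\<in>Qvecs. \<forall>y\<in>Qvecs. B (w x) (w y) = B x y)"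

definition qspan :: "(real ^ 'n) set \<Rightarrow> (real ^ 'n) set" where
  "qspan S = {x. \<exists>T c. finite T \<and> T \<subseteq> S \<and> (\<forall>v\<in>T. c v \<in> \<rat>) \<and>
                      x = (\<Sum>v\<in>T. c v *\<^sub>R v)}"

definition orth_proj :: "(real ^ 'n \<Rightarrow> real ^ 'n \<Rightarrow> real) \<Rightarrow> (real ^ 'n) set \<Rightarrow> real ^ 'n \<Rightarrow> real ^ 'n" where
  "orth_proj B V x = (THE p. p \<in> V \<and> (\<forall>v\<in>V. B (x - p) v = 0))"

definition qcone :: "(real ^ 'n) set \<Rightarrow> (real ^ 'n) set" where
  "qcone S = {x. \<exists>c. (\<forall>v\<in>S. c v \<in> \<rat> \<and> c v \<ge> 0) \<and> x = (\<Sum>v\<in>S. c v *\<^sub>R v)}"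

definition rat_poly_cone :: "(real ^ 'n) set \<Rightarrow> bool" where
  "rat_poly_cone \<sigma> \<longleftrightarrow> (\<exists>S. finite S \<and> S \<subseteq> Qvecs \<and> \<sigma> = qcone S)"

definition strongly_convex :: "(real ^ 'n) set \<Rightarrow> bool" where
  "strongly_convex \<sigma> \<longleftrightarrow> \<sigma> \<inter> uminus ` \<sigma> = {0}"

definition qface :: "(real ^ 'n) set \<Rightarrow> (real ^ 'n) set \<Rightarrow> bool" where
  "qface \<sigma> \<tau> \<longleftrightarrow> (\<exists>u\<in>Qvecs. (\<forall>x\<in>\<sigma>. u \<bullet> x \<ge> 0) \<and> \<tau> = {x\<in>\<sigma>. u \<bullet> x = 0})"

definition is_fan :: "(real ^ 'n) set set \<Rightarrow> bool" where
  "is_fan \<Sigma> \<longleftrightarrow> finite \<Sigma> \<and>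
     (\<forall>\<sigma>\<in>\<Sigma>. rat_poly_cone \<sigma> \<and> strongly_convex \<sigma>) \<and>
     (\<forall>\<sigma>\<in>\<Sigma>. \<forall>\<tau>. qface \<sigma> \<tau> \<longrightarrow> \<tau> \<in> \<Sigma>) \<and>
     (\<forall>\<sigma>\<in>\<Sigma>. \<forall>\<tau>\<in>\<Sigma>. qface \<sigma> (\<sigma> \<inter> \<tau>) \<and> qface \<tau> (\<sigma> \<inter> \<tau>))"

definition support :: "(real ^ 'n) set set \<Rightarrow> (real ^ 'n) set" where
  "support \<Sigma> = \<Union>\<Sigma>"

definition W_fan :: "(real ^ 'n \<Rightarrow> real ^ 'n) set \<Rightarrow> (real ^ 'n) set set \<Rightarrow> (real ^ 'n) set set" where
  "W_fan W \<Sigma> = {w ` \<sigma> | w \<sigma>. w \<in> W \<and> \<sigma> \<in> \<Sigma>}"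

definition qconvex :: "(real ^ 'n) set \<Rightarrow> bool" where
  "qconvex A \<longleftrightarrow> (\<forall>x\<in>A. \<forall>y\<in>A. \<forall>t\<in>\<rat>. 0 \<le> t \<and> t \<le> 1 \<longrightarrow> (1 - t) *\<^sub>R x + t *\<^sub>R y \<in> A)"

end

theory Submission
  imports Defs
begin


lemma Qvecs_iff: "x \<in> Qvecs \<longleftrightarrow> (\<forall>i. x $ i \<in> \<rat>)" by (simp add: Qvecs_def)
lemma Zvecs_iff: "x \<in> Zvecs \<longleftrightarrow> (\<forall>i. x $ i \<in> \<int>)" by (simp add: Zvecs_def)

lemma Zvecs_Qvecs: "x \<in> Zvecs \<Longrightarrow> x \<in> Qvecs"
  using Ints_subset_Rats by (auto simp: Qvecs_iff Zvecs_iff)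

lemma Qvecs_add[simp,intro]: "x \<in> Qvecs \<Longrightarrow> y \<in> Qvecs \<Longrightarrow> x + y \<in> Qvecs"
  by (simp add: Qvecs_iff)
lemma Qvecs_diff[simp,intro]: "x \<in> Qvecs \<Longrightarrow> y \<in> Qvecs \<Longrightarrow> x - y \<in> Qvecs"
  by (simp add: Qvecs_iff)
lemma Qvecs_uminus[simp,intro]: "x \<in> Qvecs \<Longrightarrow> - x \<in> Qvecs"
  by (simp add: Qvecs_iff)
lemma Qvecs_zero[simp,intro]: "0 \<in> Qvecs"
  by (simp add: Qvecs_iff)
lemma Qvecs_scale[simp,intro]: "c \<in> \<rat> \<Longrightarrow> x \<in> Qvecs \<Longrightarrow> c *\<^sub>R x \<in> Qvecs"
  by (simp add: Qvecs_iff)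
lemma Qvecs_sum[intro]: "(\<And>t. t \<in> T \<Longrightarrow> f t \<in> Qvecs) \<Longrightarrow> sum f T \<in> Qvecs"
  by (induction T rule: infinite_finite_induct) auto

lemma Zvecs_inner: "x \<in> Zvecs \<Longrightarrow> y \<in> Zvecs \<Longrightarrow> x \<bullet> y \<in> \<int>"
  unfolding inner_vec_def Zvecs_iff by (auto intro!: Ints_sum Ints_mult)
lemma Qvecs_inner: "x \<in> Qvecs \<Longrightarrow> y \<in> Qvecs \<Longrightarrow> x \<bullet> y \<in> \<rat>"
  unfolding inner_vec_def Qvecs_iff by (auto intro!: Rats_sum Rats_mult)

lemma Qvecs_zero_test: assumes "x \<in> Qvecs" "\<And>y. y \<in> Qvecs \<Longrightarrow> x \<bullet> y = 0" shows "x = 0"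
proof -
  have "x \<bullet> x = 0" using assms by auto
  thus ?thesis by simp
qed

lemma vec_eq_test: assumes "\<And>y. y \<in> Qvecs \<Longrightarrow> x \<bullet> y = z \<bullet> y" shows "x = z"
proof -
  have "x - z = 0"
  proof (rule euclidean_eqI)
    fix b :: "real^'a" assume b: "b \<in> Basis"
    have "b \<in> Qvecs" using b by (auto simp: Qvecs_iff Basis_vec_def axis_def)
    thus "(x - z) \<bullet> b = 0 \<bullet> b" using assms by (simp add: inner_diff_left)
  qed
  thus ?thesis by simp
qed




locale rdat =
  fixes Phi Delta :: "(real ^ 'n) set" and cor :: "real ^ 'n \<Rightarrow> real ^ 'n"
    and B :: "real ^ 'n \<Rightarrow> real ^ 'n \<Rightarrow> real"
  assumes rd: "reduced_root_datum Phi cor" and base: "is_base Phi Delta"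
    and QB: "Q_inner_product B" and WI: "W_invariant (weyl_group Phi cor) B"
begin

lemma Bsym: "x \<in> Qvecs \<Longrightarrow> y \<in> Qvecs \<Longrightarrow> B x y = B y x"
  using QB unfolding Q_inner_product_def by blast
lemma Brat: "x \<in> Qvecs \<Longrightarrow> y \<in> Qvecs \<Longrightarrow> B x y \<in> \<rat>"
  using QB unfolding Q_inner_product_def by blast
lemma Badd: "x \<in> Qvecs \<Longrightarrow> y \<in> Qvecs \<Longrightarrow> z \<in> Qvecs \<Longrightarrow> B (x + y) z = B x z + B y z"
  using QB unfolding Q_inner_product_def by blast
lemma Bscale: "c \<in> \<rat> \<Longrightarrow> x \<in> Qvecs \<Longrightarrow> y \<in> Qvecs \<Longrightarrow> B (c *\<^sub>R x) y = c * B x y"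
  using QB unfolding Q_inner_product_def by blast
lemma Bpos: "x \<in> Qvecs \<Longrightarrow> x \<noteq> 0 \<Longrightarrow> B x x > 0"
  using QB unfolding Q_inner_product_def by blast

lemma Bzero: "y \<in> Qvecs \<Longrightarrow> B 0 y = 0"
  using Badd[of 0 0 y] by simp
lemma Bneg: "x \<in> Qvecs \<Longrightarrow> y \<in> Qvecs \<Longrightarrow> B (- x) y = - B x y"
  using Bscale[of "-1" x y] by simp
lemma Bdiff: "x \<in> Qvecs \<Longrightarrow> y \<in> Qvecs \<Longrightarrow> z \<in> Qvecs \<Longrightarrow> B (x - y) z = B x z - B y z"
  using Badd[of x "-y" z] Bneg[of y z] by simp
lemma Badd2: "x \<in> Qvecs \<Longrightarrow> y \<in> Qvecs \<Longrightarrow> z \<in> Qvecs \<Longrightarrow> B z (x + y) = B z x + B z y"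
  using Badd Bsym by simp
lemma Bdiff2: "x \<in> Qvecs \<Longrightarrow> y \<in> Qvecs \<Longrightarrow> z \<in> Qvecs \<Longrightarrow> B z (x - y) = B z x - B z y"
  using Bdiff Bsym by simp
lemma Bneg2: "x \<in> Qvecs \<Longrightarrow> y \<in> Qvecs \<Longrightarrow> B y (- x) = - B y x"
  using Bneg Bsym by simp
lemma Bscale2: "c \<in> \<rat> \<Longrightarrow> x \<in> Qvecs \<Longrightarrow> y \<in> Qvecs \<Longrightarrow> B y (c *\<^sub>R x) = c * B y x"
  using Bscale Bsym by simp
lemma Bsum: "(\<And>t. t \<in> T \<Longrightarrow> f t \<in> Qvecs) \<Longrightarrow> z \<in> Qvecs \<Longrightarrow> B (sum f T) z = (\<Sum>t\<in>T. B (f t) z)"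
proof (induction T rule: infinite_finite_induct)
  case (infinite A) then show ?case by (simp add: Bzero)
next
  case empty then show ?case by (simp add: Bzero)
next
  case (insert x F) then show ?case by (simp add: Badd Qvecs_sum)
qed
lemma Bsum2: "(\<And>t. t \<in> T \<Longrightarrow> f t \<in> Qvecs) \<Longrightarrow> z \<in> Qvecs \<Longrightarrow> B z (sum f T) = (\<Sum>t\<in>T. B z (f t))"
  using Bsum[of T f z] Bsym by (simp add: Qvecs_sum)

lemma B_nondeg: "x \<in> Qvecs \<Longrightarrow> B x x = 0 \<Longrightarrow> x = 0"
  using Bpos by fastforce

end



context rdat begin

definition sL :: "real^'n \<Rightarrow> real^'n \<Rightarrow> real^'n" where "sL a = refl a (cor a)"
definition sX :: "real^'n \<Rightarrow> real^'n \<Rightarrow> real^'n" where "sX a b = b - (b \<bullet> cor a) *\<^sub>R a"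
definition actL :: "(real^'n) list \<Rightarrow> real^'n \<Rightarrow> real^'n" where
  "actL L = foldr (\<circ>) (map (\<lambda>a. refl a (cor a)) L) id"
definition actX :: "(real^'n) list \<Rightarrow> real^'n \<Rightarrow> real^'n" where
  "actX L = foldr (\<circ>) (map sX L) id"

lemma actL_Nil[simp]: "actL [] = id" by (simp add: actL_def)
lemma actL_Cons[simp]: "actL (a # L) = sL a \<circ> actL L" by (simp add: actL_def sL_def)
lemma actL_append: "actL (L @ M) = actL L \<circ> actL M" by (induction L) auto
lemma actX_Nil[simp]: "actX [] = id" by (simp add: actX_def)
lemma actX_Cons[simp]: "actX (a # L) = sX a \<circ> actX L" by (simp add: actX_def)
lemma actX_append: "actX (L @ M) = actX L \<circ> actX M" by (induction L) auto

lemma Phi_fin: "finite Phi" using rd by (simp add: reduced_root_datum_def)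
lemma Phi_Z: "a \<in> Phi \<Longrightarrow> a \<in> Zvecs" using rd by (auto simp: reduced_root_datum_def)
lemma cor_Z: "a \<in> Phi \<Longrightarrow> cor a \<in> Zvecs" using rd by (auto simp: reduced_root_datum_def)
lemma Phi_Q: "a \<in> Phi \<Longrightarrow> a \<in> Qvecs" using Phi_Z Zvecs_Qvecs by blast
lemma cor_Q: "a \<in> Phi \<Longrightarrow> cor a \<in> Qvecs" using cor_Z Zvecs_Qvecs by blast
lemma pair2: "a \<in> Phi \<Longrightarrow> a \<bullet> cor a = 2" using rd by (auto simp: reduced_root_datum_def)
lemma sX_Phi: "a \<in> Phi \<Longrightarrow> b \<in> Phi \<Longrightarrow> sX a b \<in> Phi"
  using rd by (auto simp: reduced_root_datum_def sX_def)
lemma cor_refl_Phi: "a \<in> Phi \<Longrightarrow> b \<in> Phi \<Longrightarrow> sL a (cor b) \<in> cor ` Phi"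
  using rd by (auto simp: reduced_root_datum_def sL_def refl_def)
lemma reduced: "a \<in> Phi \<Longrightarrow> c *\<^sub>R a \<in> Phi \<Longrightarrow> c = 1 \<or> c = -1"
  using rd by (auto simp: reduced_root_datum_def)
lemma Delta_Phi: "Delta \<subseteq> Phi" using base by (simp add: is_base_def)
lemma Delta_fin: "finite Delta" using Delta_Phi Phi_fin finite_subset by blast
lemma Delta_indep: "independent Delta" using base by (simp add: is_base_def)
lemma Phi_nz: "a \<in> Phi \<Longrightarrow> a \<noteq> 0" using pair2 by fastforce
lemma cor_nz: "a \<in> Phi \<Longrightarrow> cor a \<noteq> 0" using pair2 by fastforce

lemma pair_int: "a \<in> Phi \<Longrightarrow> b \<in> Phi \<Longrightarrow> a \<bullet> cor b \<in> \<int>"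
  using Zvecs_inner Phi_Z cor_Z by blast

lemma sL_inv[simp]: "a \<in> Phi \<Longrightarrow> sL a (sL a x) = x"
  by (simp add: sL_def refl_def inner_diff_right pair2 algebra_simps)
lemma sX_inv[simp]: "a \<in> Phi \<Longrightarrow> sX a (sX a x) = x"
  by (simp add: sX_def inner_diff_left pair2 algebra_simps)
lemma transp: "b \<bullet> sL a x = sX a b \<bullet> x"
  by (simp add: sL_def sX_def refl_def inner_diff_right inner_diff_left algebra_simps inner_commute)
lemma sL_cor_self: "a \<in> Phi \<Longrightarrow> sL a (cor a) = - cor a"
  by (simp add: sL_def refl_def pair2 scaleR_2)
lemma sX_self: "a \<in> Phi \<Longrightarrow> sX a a = - a"
  by (simp add: sX_def pair2 scaleR_2)
lemma sX_neg: "sX a (- b) = - sX a b" by (simp add: sX_def)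
lemma actX_neg: "actX L (- b) = - actX L b" by (induction L) (auto simp: sX_neg)

lemma sL_Q: "a \<in> Phi \<Longrightarrow> x \<in> Qvecs \<Longrightarrow> sL a x \<in> Qvecs"
  unfolding sL_def refl_def using Qvecs_inner Phi_Q cor_Q by (intro Qvecs_diff Qvecs_scale) auto

lemma linear_sL: "linear (sL a)"
  unfolding sL_def refl_def by (auto intro!: linearI simp: algebra_simps inner_add_right)

lemma actL_Q: "set L \<subseteq> Phi \<Longrightarrow> x \<in> Qvecs \<Longrightarrow> actL L x \<in> Qvecs"
  by (induction L) (auto simp: sL_Q)
lemma actX_Phi: "set L \<subseteq> Phi \<Longrightarrow> b \<in> Phi \<Longrightarrow> actX L b \<in> Phi"
  by (induction L) (auto simp: sX_Phi)
lemma actL_W: "set L \<subseteq> Phi \<Longrightarrow> actL L \<in> weyl_group Phi cor"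
  unfolding weyl_group_def actL_def by blast
lemma actL_B: "set L \<subseteq> Phi \<Longrightarrow> x \<in> Qvecs \<Longrightarrow> y \<in> Qvecs \<Longrightarrow> B (actL L x) (actL L y) = B x y"
  using WI actL_W unfolding W_invariant_def by blast
lemma actL_rev_inv: "set L \<subseteq> Phi \<Longrightarrow> actL (rev L) (actL L x) = x"
  by (induction L arbitrary: x) (auto simp: actL_append)
lemma actL_inv_rev: "set L \<subseteq> Phi \<Longrightarrow> actL L (actL (rev L) x) = x"
  by (induction L arbitrary: x) (auto simp: actL_append)
lemma transpL: "b \<bullet> actL L x = actX (rev L) b \<bullet> x"
  by (induction L arbitrary: b x) (auto simp: actX_append transp)

lemma Bcc_pos: "a \<in> Phi \<Longrightarrow> B (cor a) (cor a) > 0"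
  using Bpos cor_Q cor_nz by blast

lemma root_formula: assumes a: "a \<in> Phi" and x: "x \<in> Qvecs"
  shows "(a \<bullet> x) * B (cor a) (cor a) = 2 * B x (cor a)"
proof -
  have ca: "cor a \<in> Qvecs" using cor_Q a by blast
  have ax: "a \<bullet> x \<in> \<rat>" using Qvecs_inner Phi_Q a x by blast
  have "B (sL a x) (sL a (cor a)) = B x (cor a)"
    using actL_B[of "[a]" x "cor a"] a x ca by simp
  moreover have "sL a x = x - (a \<bullet> x) *\<^sub>R cor a" by (simp add: sL_def refl_def)
  moreover have "B (x - (a \<bullet> x) *\<^sub>R cor a) (- cor a) = - B x (cor a) + (a \<bullet> x) * B (cor a) (cor a)"
    using x ca ax by (simp add: Bneg2 Bdiff Bscale Qvecs_scale)
  ultimately show ?thesis using sL_cor_self[OF a] by simp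
qed

lemma root_via_B: assumes a: "a \<in> Phi" and x: "x \<in> Qvecs"
  shows "a \<bullet> x = 2 * B x (cor a) / B (cor a) (cor a)"
  using root_formula[OF a x] Bcc_pos[OF a] by (simp add: field_simps)

lemma sign_root: assumes a: "a \<in> Phi" and x: "x \<in> Qvecs"
  shows "a \<bullet> x \<ge> 0 \<longleftrightarrow> B x (cor a) \<ge> 0" "a \<bullet> x = 0 \<longleftrightarrow> B x (cor a) = 0"
  using root_via_B[OF a x] Bcc_pos[OF a] by (auto simp: zero_le_divide_iff divide_eq_0_iff)

lemma compat: assumes a: "a \<in> Phi" and b: "b \<in> Phi"
  shows "cor (sX a b) = sL a (cor b)"
proof -
  obtain c where c: "c \<in> Phi" "cor c = sL a (cor b)" using cor_refl_Phi[OF a b] by (metis imageE)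
  have cb: "cor b \<in> Qvecs" using cor_Q b by blast
  have "c = sX a b"
  proof (rule vec_eq_test)
    fix y :: "real^'n" assume y: "y \<in> Qvecs"
    have sy: "sL a y \<in> Qvecs" using sL_Q a y by blast
    have "B (cor c) (cor c) = B (cor b) (cor b)"
      using c actL_B[of "[a]" "cor b" "cor b"] a cb by simp
    moreover have "B y (cor c) = B (sL a y) (cor b)"
      using c actL_B[of "[a]" "sL a y" "cor b"] a cb sy by simp
    ultimately have "c \<bullet> y = b \<bullet> sL a y"
      using root_via_B[OF c(1) y] root_via_B[OF b sy] by simp
    thus "c \<bullet> y = sX a b \<bullet> y" by (simp add: transp)
  qed
  thus ?thesis using c by simp
qed

lemma neg_Phi: "a \<in> Phi \<Longrightarrow> - a \<in> Phi" using sX_Phi sX_self by metis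
lemma cor_neg: "a \<in> Phi \<Longrightarrow> cor (- a) = - cor a"
  using compat[of a a] sX_self sL_cor_self by metis

lemma actL_cor: "set L \<subseteq> Phi \<Longrightarrow> b \<in> Phi \<Longrightarrow> actL L (cor b) = cor (actX L b)"
  by (induction L) (auto simp: compat actX_Phi)

lemma sL_conj: assumes "a \<in> Phi" "b \<in> Phi"
  shows "sL (sX a b) = sL a \<circ> sL b \<circ> sL a"
proof
  fix x
  have l: "sL a (u - c *\<^sub>R v) = sL a u - c *\<^sub>R sL a v" for u v c
    using linear_sL[of a] by (simp add: linear_diff linear_scale)
  have "sL (sX a b) x = x - (sX a b \<bullet> x) *\<^sub>R cor (sX a b)" by (simp add: sL_def refl_def)
  also have "\<dots> = x - (b \<bullet> sL a x) *\<^sub>R sL a (cor b)" using assms by (simp add: compat transp)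
  also have "\<dots> = sL a (sL a x - (b \<bullet> sL a x) *\<^sub>R cor b)" using assms by (simp add: l)
  also have "\<dots> = (sL a \<circ> sL b \<circ> sL a) x" by (simp add: sL_def refl_def)
  finally show "sL (sX a b) x = (sL a \<circ> sL b \<circ> sL a) x" .
qed

end



context rdat begin

definition coef :: "real^'n \<Rightarrow> real^'n \<Rightarrow> int" where
  "coef a = (SOME c. a = (\<Sum>d\<in>Delta. of_int (c d) *\<^sub>R d) \<and>
        ((\<forall>d\<in>Delta. c d \<ge> 0) \<or> (\<forall>d\<in>Delta. c d \<le> 0)))"

lemma coef_ex: assumes "a \<in> Phi"
  shows "a = (\<Sum>d\<in>Delta. of_int (coef a d) *\<^sub>R d) \<and>
        ((\<forall>d\<in>Delta. coef a d \<ge> 0) \<or> (\<forall>d\<in>Delta. coef a d \<le> 0))"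
proof -
  have "\<exists>c :: real ^ 'n \<Rightarrow> int. a = (\<Sum>d\<in>Delta. of_int (c d) *\<^sub>R d) \<and>
        ((\<forall>d\<in>Delta. c d \<ge> 0) \<or> (\<forall>d\<in>Delta. c d \<le> 0))"
    using base assms by (simp add: is_base_def)
  thus ?thesis unfolding coef_def by (rule someI_ex)
qed

lemma coef_rep: "a \<in> Phi \<Longrightarrow> a = (\<Sum>d\<in>Delta. of_int (coef a d) *\<^sub>R d)"
  using coef_ex by blast

lemma indep_unique:
  assumes "(\<Sum>d\<in>Delta. r d *\<^sub>R d) = (\<Sum>d\<in>Delta. s d *\<^sub>R d)" "d \<in> Delta"
  shows "r d = s d"
proof -
  have "(\<Sum>d\<in>Delta. (r d - s d) *\<^sub>R d) = 0"
    using assms(1) by (simp add: scaleR_diff_left sum_subtractf)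
  moreover have "\<forall>c. (\<Sum>v\<in>Delta. c v *\<^sub>R v) = 0 \<longrightarrow> (\<forall>v\<in>Delta. c v = 0)"
    using Delta_indep unfolding independent_explicit by blast
  ultimately have "\<forall>v\<in>Delta. r v - s v = 0" by (auto dest!: spec[where x="\<lambda>v. r v - s v"])
  thus ?thesis using assms(2) by simp
qed

lemma coef_unique: assumes "a \<in> Phi" "a = (\<Sum>d\<in>Delta. of_int (c d) *\<^sub>R d)" "d \<in> Delta"
  shows "coef a d = c d"
proof -
  have "real_of_int (coef a d) = real_of_int (c d)"
    using indep_unique[of "\<lambda>d. of_int (coef a d)" "\<lambda>d. of_int (c d)" d] coef_rep[OF assms(1)] assms
    by simp
  thus ?thesis by simp
qed

definition pos :: "real^'n \<Rightarrow> bool" where "pos a \<longleftrightarrow> (\<forall>d\<in>Delta. coef a d \<ge> 0)"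

lemma coef_neg: assumes "a \<in> Phi" "d \<in> Delta" shows "coef (- a) d = - coef a d"
proof -
  have "- a = - (\<Sum>d\<in>Delta. of_int (coef a d) *\<^sub>R d)"
    using coef_rep[OF assms(1)] by (rule arg_cong)
  also have "\<dots> = (\<Sum>d\<in>Delta. of_int (- coef a d) *\<^sub>R d)"
    by (simp add: sum_negf)
  finally have "- a = (\<Sum>d\<in>Delta. of_int (- coef a d) *\<^sub>R d)" .
  thus ?thesis using coef_unique[OF neg_Phi[OF assms(1)], of "\<lambda>d. - coef a d" d] assms(2) by simp
qed

lemma pos_or_neg: assumes "a \<in> Phi" shows "pos a \<or> pos (- a)"
proof -
  have "(\<forall>d\<in>Delta. coef a d \<ge> 0) \<or> (\<forall>d\<in>Delta. coef a d \<le> 0)" using coef_ex[OF assms] by blast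
  thus ?thesis using coef_neg[OF assms] unfolding pos_def by auto
qed

lemma not_pos_both: assumes "a \<in> Phi" "pos a" "pos (- a)" shows False
proof -
  have "\<forall>d\<in>Delta. coef a d = 0" using assms coef_neg[OF assms(1)] by (force simp: pos_def)
  hence "(\<Sum>d\<in>Delta. of_int (coef a d) *\<^sub>R d) = 0" by simp
  hence "a = 0" using coef_rep[OF assms(1)] by metis
  thus False using Phi_nz assms(1) by blast
qed

lemma coef_sign: "a \<in> Phi \<Longrightarrow> (\<forall>d\<in>Delta. coef a d \<ge> 0) \<or> (\<forall>d\<in>Delta. coef a d \<le> 0)"
  using coef_ex by blast

lemma pos_if_coef: assumes "a \<in> Phi" "d \<in> Delta" "coef a d > 0" shows "pos a"
  using coef_sign[OF assms(1)] assms by (force simp: pos_def)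

lemma delta_sum: "d \<in> Delta \<Longrightarrow> (\<Sum>e\<in>Delta. of_int (if e = d then 1 else 0) *\<^sub>R e) = d"
proof -
  assume d: "d \<in> Delta"
  have "(\<Sum>e\<in>Delta. of_int (if e = d then 1 else 0) *\<^sub>R e) = (\<Sum>e\<in>Delta. if e = d then e else 0)"
    by (rule sum.cong) auto
  also have "\<dots> = d" using d Delta_fin by (simp add: sum.delta)
  finally show ?thesis .
qed

lemma coef_simple: "d \<in> Delta \<Longrightarrow> e \<in> Delta \<Longrightarrow> coef d e = (if e = d then 1 else 0)"
  using coef_unique[of d "\<lambda>e. if e = d then 1 else 0" e] delta_sum Delta_Phi by auto

lemma pos_simple: "d \<in> Delta \<Longrightarrow> pos d"
  using coef_simple by (simp add: pos_def)

lemma coef_sX: assumes a: "a \<in> Phi" and d: "d \<in> Delta" and k: "of_int k = a \<bullet> cor d" and e: "e \<in> Delta"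
  shows "coef (sX d a) e = coef a e - (if e = d then k else 0)"
proof -
  have "(\<Sum>e\<in>Delta. of_int (coef a e - (if e = d then k else 0)) *\<^sub>R e)
      = (\<Sum>e\<in>Delta. of_int (coef a e) *\<^sub>R e) - (\<Sum>e\<in>Delta. of_int (if e = d then k else 0) *\<^sub>R e)"
    by (simp add: scaleR_diff_left sum_subtractf)
  also have "(\<Sum>e\<in>Delta. of_int (if e = d then k else 0) *\<^sub>R e) = (\<Sum>e\<in>Delta. if e = d then of_int k *\<^sub>R e else 0)"
    by (rule sum.cong) auto
  also have "\<dots> = of_int k *\<^sub>R d" using d Delta_fin by (simp add: sum.delta)
  finally have eq: "(\<Sum>e\<in>Delta. of_int (coef a e - (if e = d then k else 0)) *\<^sub>R e) =
       (\<Sum>e\<in>Delta. of_int (coef a e) *\<^sub>R e) - of_int k *\<^sub>R d" .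
  have "sX d a = a - of_int k *\<^sub>R d" using k by (simp add: sX_def)
  hence "sX d a = (\<Sum>e\<in>Delta. of_int (coef a e - (if e = d then k else 0)) *\<^sub>R e)"
    using eq coef_rep[OF a] by metis
  thus ?thesis using coef_unique[OF sX_Phi[OF subsetD[OF Delta_Phi d] a], of "\<lambda>e. coef a e - (if e = d then k else 0)" e] e by simp
qed

definition Cham where "Cham = pos_chamber Delta"

lemma Cham_iff: "x \<in> Cham \<longleftrightarrow> x \<in> Qvecs \<and> (\<forall>d\<in>Delta. d \<bullet> x \<ge> 0)"
  by (simp add: Cham_def pos_chamber_def)

lemma pos_nonneg: assumes "a \<in> Phi" "pos a" "x \<in> Cham" shows "a \<bullet> x \<ge> 0"
proof -
  have "a \<bullet> x = (\<Sum>d\<in>Delta. of_int (coef a d) * (d \<bullet> x))"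
    using coef_rep[OF assms(1)] by (metis (no_types, lifting) inner_scaleR_left inner_sum_left sum.cong)
  also have "\<dots> \<ge> 0" using assms by (auto simp: pos_def Cham_iff intro!: sum_nonneg)
  finally show ?thesis .
qed

lemma perm_pos: assumes d: "d \<in> Delta" and a: "a \<in> Phi" and p: "pos a" and ne: "a \<noteq> d"
  shows "pos (sX d a)"
proof -
  obtain k where k: "of_int k = a \<bullet> cor d" using pair_int a Delta_Phi d by (metis Ints_cases subsetD)
  have "\<exists>e\<in>Delta. e \<noteq> d \<and> coef a e > 0"
  proof (rule ccontr)
    assume "\<not> ?thesis"
    hence z: "\<forall>e\<in>Delta. e \<noteq> d \<longrightarrow> coef a e = 0" using p by (force simp: pos_def)
    have "(\<Sum>e\<in>Delta. of_int (coef a e) *\<^sub>R e) = (\<Sum>e\<in>Delta. if e = d then of_int (coef a d) *\<^sub>R e else 0)"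
      by (rule sum.cong) (use z in auto)
    hence "a = (\<Sum>e\<in>Delta. if e = d then of_int (coef a d) *\<^sub>R e else 0)"
      using coef_rep[OF a] by metis
    also have "\<dots> = of_int (coef a d) *\<^sub>R d" using d Delta_fin by (simp add: sum.delta)
    finally have ad: "a = of_int (coef a d) *\<^sub>R d" .
    have "real_of_int (coef a d) = 1 \<or> real_of_int (coef a d) = -1"
      using reduced[of d "of_int (coef a d)"] ad a d Delta_Phi by auto
    moreover have "coef a d \<ge> 0" using p d by (simp add: pos_def)
    ultimately have "coef a d = 1" by linarith
    thus False using ad ne by simp
  qed
  then obtain e where e: "e \<in> Delta" "e \<noteq> d" "coef a e > 0" by blast
  have "coef (sX d a) e > 0" using coef_sX[OF a d k e(1)] e by simp
  thus ?thesis using pos_if_coef sX_Phi a d Delta_Phi e(1) by blast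
qed

end



context rdat begin

definition ht :: "real^'n \<Rightarrow> int" where "ht a = (\<Sum>d\<in>Delta. coef a d)"

lemma ht_nonneg: "pos a \<Longrightarrow> ht a \<ge> 0"
  unfolding ht_def pos_def by (rule sum_nonneg) auto

lemma ht_sX: assumes a: "a \<in> Phi" and d: "d \<in> Delta" and k: "of_int k = a \<bullet> cor d"
  shows "ht (sX d a) = ht a - k"
proof -
  have "ht (sX d a) = (\<Sum>e\<in>Delta. coef a e - (if e = d then k else 0))"
    unfolding ht_def by (rule sum.cong) (auto simp: coef_sX[OF a d k])
  also have "\<dots> = ht a - k" using d Delta_fin by (simp add: sum_subtractf ht_def sum.delta)
  finally show ?thesis .
qed

lemma exists_pos_pair: assumes a: "a \<in> Phi" and p: "pos a"
  shows "\<exists>d\<in>Delta. a \<bullet> cor d > 0"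
proof -
  have ca: "cor a \<in> Qvecs" using cor_Q a by blast
  have "a \<bullet> cor a = (\<Sum>d\<in>Delta. of_int (coef a d) * (d \<bullet> cor a))"
    using coef_rep[OF a] by (metis (no_types, lifting) inner_scaleR_left inner_sum_left sum.cong)
  hence "(\<Sum>d\<in>Delta. of_int (coef a d) * (d \<bullet> cor a)) > 0" using pair2 a by simp
  then obtain d where d: "d \<in> Delta" "of_int (coef a d) * (d \<bullet> cor a) > 0"
    by (metis (no_types, lifting) not_le sum_nonpos)
  have "coef a d \<ge> 0" using p d by (simp add: pos_def)
  hence "d \<bullet> cor a > 0" using d(2) by (smt (verit) mult_nonneg_nonpos of_int_nonneg)
  hence "B (cor a) (cor d) > 0" using sign_root[of d "cor a"] d Delta_Phi ca by fastforce
  hence "B (cor d) (cor a) > 0" using Bsym cor_Q a d Delta_Phi by (metis subsetD)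
  hence "a \<bullet> cor d > 0" using sign_root[of a "cor d"] a cor_Q d Delta_Phi by fastforce
  thus ?thesis using d by blast
qed

lemma gen_pos: "a \<in> Phi \<Longrightarrow> pos a \<Longrightarrow> \<exists>L. set L \<subseteq> Delta \<and> sL a = actL L"
proof (induction "nat (ht a)" arbitrary: a rule: less_induct)
  case less
  show ?case
  proof (cases "a \<in> Delta")
    case True
    then show ?thesis by (intro exI[of _ "[a]"]) auto
  next
    case False
    obtain d where d: "d \<in> Delta" "a \<bullet> cor d > 0" using exists_pos_pair less.prems by blast
    have dP: "d \<in> Phi" using d Delta_Phi by blast
    obtain k where k: "of_int k = a \<bullet> cor d" using pair_int less.prems(1) dP by (metis Ints_cases)
    have k1: "k \<ge> 1" using k d(2) by simp
    define b where "b = sX d a"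
    have bP: "b \<in> Phi" unfolding b_def using sX_Phi dP less.prems by blast
    have bpos: "pos b" unfolding b_def using perm_pos d(1) less.prems False by blast
    have "ht b = ht a - k" unfolding b_def using ht_sX less.prems(1) d(1) k by blast
    hence "nat (ht b) < nat (ht a)" using k1 ht_nonneg[OF bpos] by simp
    then obtain Lb where Lb: "set Lb \<subseteq> Delta" "sL b = actL Lb" using less.hyps bP bpos by blast
    have "sL a = sL d \<circ> sL b \<circ> sL d"
      using sL_conj[OF dP bP] unfolding b_def using sX_inv dP by simp
    hence "sL a = actL (d # Lb @ [d])" using Lb by (simp add: actL_append comp_assoc)
    thus ?thesis using Lb d by (intro exI[of _ "d # Lb @ [d]"]) auto
  qed
qed

lemma sL_neg: "a \<in> Phi \<Longrightarrow> sL (- a) = sL a"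
  by (rule ext) (simp add: sL_def refl_def cor_neg)

lemma gen_all: assumes "a \<in> Phi" shows "\<exists>L. set L \<subseteq> Delta \<and> sL a = actL L"
proof (cases "pos a")
  case True then show ?thesis using gen_pos assms by blast
next
  case False
  hence "pos (- a)" using pos_or_neg assms by blast
  thus ?thesis using gen_pos[of "- a"] neg_Phi assms sL_neg by auto
qed

lemma W_simple: assumes "w \<in> weyl_group Phi cor" shows "\<exists>L. set L \<subseteq> Delta \<and> w = actL L"
proof -
  obtain l where l: "set l \<subseteq> Phi" "w = actL l" using assms unfolding weyl_group_def actL_def by blast
  have "\<exists>L. set L \<subseteq> Delta \<and> actL l = actL L" using l(1)
  proof (induction l)
    case Nil then show ?case by (intro exI[of _ "[]"]) auto
  next
    case (Cons a l)
    have aP: "a \<in> Phi" using Cons.prems by simp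
    obtain L1 where L1: "set L1 \<subseteq> Delta" "sL a = actL L1" using gen_all[OF aP] by blast
    obtain L2 where L2: "set L2 \<subseteq> Delta" "actL l = actL L2" using Cons by auto
    show ?case using L1 L2 by (intro exI[of _ "L1 @ L2"]) (auto simp: actL_append)
  qed
  thus ?thesis using l by auto
qed

end



lemma sign_change: "\<not> f (0::nat) \<Longrightarrow> f n \<Longrightarrow> \<exists>j<n. \<not> f j \<and> f (Suc j)"
proof (induction n)
  case 0 then show ?case by simp
next
  case (Suc n)
  then show ?case by (cases "f n") (auto intro: less_SucI)
qed

context rdat begin

lemma actL_neg: "set L \<subseteq> Phi \<Longrightarrow> actL L (- v) = - actL L v"
proof (induction L)
  case Nil then show ?case by simp
next
  case (Cons a L) then show ?case using linear_sL[of a] by (simp add: linear_neg)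
qed

lemma conjL: "set u \<subseteq> Phi \<Longrightarrow> d \<in> Phi \<Longrightarrow> sL (actX u d) = actL u \<circ> sL d \<circ> actL (rev u)"
proof (induction u)
  case Nil then show ?case by simp
next
  case (Cons a u)
  have aP: "a \<in> Phi" and uP: "set u \<subseteq> Phi" using Cons.prems by auto
  have "sL (actX (a # u) d) = sL (sX a (actX u d))" by simp
  also have "\<dots> = sL a \<circ> sL (actX u d) \<circ> sL a" using sL_conj aP actX_Phi uP Cons.prems(2) by blast
  also have "\<dots> = sL a \<circ> (actL u \<circ> sL d \<circ> actL (rev u)) \<circ> sL a" using Cons.IH[OF uP Cons.prems(2)] by (simp only:)
  also have "\<dots> = actL (a # u) \<circ> sL d \<circ> actL (rev (a # u))" by (simp add: actL_append comp_assoc)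
  finally show ?case .
qed

lemma min_last: assumes L': "set L' \<subseteq> Delta" and d: "d \<in> Delta" and np: "\<not> pos (actX L' d)"
  shows "\<exists>M. set M \<subseteq> Delta \<and> length M < length (L' @ [d]) \<and> actL M = actL (L' @ [d])"
proof -
  have DP: "Delta \<subseteq> Phi" by (rule Delta_Phi)
  define f where "f j = pos (actX (drop j L') d)" for j
  have "\<not> f 0" using np by (simp add: f_def)
  moreover have "f (length L')" using pos_simple d by (simp add: f_def)
  ultimately obtain j where j: "j < length L'" "\<not> f j" "f (Suc j)" using sign_change[of f] by blast
  define e where "e = L' ! j"
  define u where "u = drop (Suc j) L'"
  have dj: "drop j L' = e # u" unfolding e_def u_def using j(1) by (simp add: Cons_nth_drop_Suc)
  have eD: "e \<in> Delta" using L' j(1) unfolding e_def by (meson nth_mem subsetD)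
  have uD: "set u \<subseteq> Delta" using L' unfolding u_def by (meson in_set_dropD subset_code(1))
  have uP: "set u \<subseteq> Phi" using uD DP by blast
  have dP: "d \<in> Phi" using d DP by blast
  have bP: "actX u d \<in> Phi" using actX_Phi uP dP by blast
  have pb: "pos (actX u d)" using j(3) by (simp add: f_def u_def)
  have npb: "\<not> pos (sX e (actX u d))" using j(2) dj by (simp add: f_def)
  have be: "actX u d = e" using perm_pos[OF eD bP pb] npb by blast
  have se: "sL e = actL u \<circ> sL d \<circ> actL (rev u)" using conjL[OF uP dP] be by simp
  have L'eq: "L' = take j L' @ e # u" using dj by (metis append_take_drop_id)
  have "actL (L' @ [d]) = actL (take j L') \<circ> sL e \<circ> actL u \<circ> sL d"
    by (subst L'eq) (simp add: actL_append comp_assoc)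
  also have "\<dots> = actL (take j L' @ u)"
  proof (rule ext)
    fix x
    show "(actL (take j L') \<circ> sL e \<circ> actL u \<circ> sL d) x = actL (take j L' @ u) x"
      using se uP dP by (simp add: actL_append actL_rev_inv)
  qed
  finally have eq: "actL (take j L' @ u) = actL (L' @ [d])" by simp
  have "length (take j L' @ u) < length (L' @ [d])" using j(1) by (simp add: u_def)
  moreover have "set (take j L' @ u) \<subseteq> Delta" using L' uD by (auto dest: in_set_takeD)
  ultimately show ?thesis using eq by blast
qed

lemma dom_L: "length L = n \<Longrightarrow> set L \<subseteq> Delta \<Longrightarrow> y \<in> Cham \<Longrightarrow> actL L y \<in> Cham \<Longrightarrow> actL L y = y"
proof (induction n arbitrary: L rule: less_induct)
  case (less n)
  show ?case
  proof (cases L rule: rev_exhaust)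
    case Nil then show ?thesis by simp
  next
    case (snoc L' d)
    have L': "set L' \<subseteq> Delta" and d: "d \<in> Delta" using less.prems snoc by auto
    have DP: "Delta \<subseteq> Phi" by (rule Delta_Phi)
    have dP: "d \<in> Phi" using d DP by blast
    have L'P: "set L' \<subseteq> Phi" using L' DP by blast
    have yQ: "y \<in> Qvecs" using less.prems(3) by (simp add: Cham_iff)
    show ?thesis
    proof (cases "pos (actX L' d)")
      case False
      then obtain M where M: "set M \<subseteq> Delta" "length M < length L" "actL M = actL L"
        using min_last[OF L' d] snoc by blast
      show ?thesis using less.IH[of "length M" M] M less.prems by metis
    next
      case True
      define b where "b = actX L' d"
      have bP: "b \<in> Phi" unfolding b_def using actX_Phi L'P dP by blast
      have LP: "set L \<subseteq> Phi" using less.prems(2) DP by blast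
      have cdQ: "cor d \<in> Qvecs" using cor_Q dP by blast
      have wyQ: "actL L y \<in> Qvecs" using less.prems(4) by (simp add: Cham_iff)
      have "actL L (cor d) = actL L' (sL d (cor d))" using snoc by (simp add: actL_append)
      also have "\<dots> = - cor b" using sL_cor_self[OF dP] actL_neg[OF L'P] actL_cor[OF L'P dP]
        by (simp add: b_def)
      finally have wc: "actL L (cor d) = - cor b" .
      have "B (actL L y) (actL L (cor d)) = B y (cor d)" using actL_B[OF LP yQ cdQ] .
      hence e1: "- B (actL L y) (cor b) = B y (cor d)" using wc Bneg2 wyQ cor_Q bP by simp
      have "b \<bullet> actL L y \<ge> 0" using pos_nonneg bP True less.prems(4) by (simp add: b_def)
      hence "B (actL L y) (cor b) \<ge> 0" using sign_root(1)[OF bP wyQ] by simp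
      moreover have "B y (cor d) \<ge> 0" using sign_root(1)[OF dP yQ] d less.prems(3)
        by (simp add: Cham_iff)
      ultimately have "B y (cor d) = 0" using e1 by simp
      hence "d \<bullet> y = 0" using sign_root(2)[OF dP yQ] by simp
      hence sy: "sL d y = y" by (simp add: sL_def refl_def)
      have "actL L y = actL L' y" using snoc sy by (simp add: actL_append)
      moreover have "actL L' y = y"
        using less.IH[of "length L'" L'] less.prems snoc L' \<open>actL L y = actL L' y\<close> by simp
      ultimately show ?thesis by simp
    qed
  qed
qed

lemma dominance: assumes "w \<in> weyl_group Phi cor" "y \<in> Cham" "w y \<in> Cham" shows "w y = y"
  using W_simple[OF assms(1)] dom_L assms by blast

end



lemma qconvex_avg:
  assumes cv: "qconvex A" and fin: "finite S" and ne: "S \<noteq> {}" and sub: "S \<subseteq> A"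
  shows "(1 / real (card S)) *\<^sub>R sum id S \<in> A"
  using fin ne sub
proof (induction S rule: finite_ne_induct)
  case (singleton x) then show ?case by simp
next
  case (insert a S)
  define n where "n = real (card S)"
  have n: "n > 0" using insert.hyps(1,2) by (simp add: n_def card_gt_0_iff)
  have avgO: "(1 / n) *\<^sub>R sum id S \<in> A" using insert by (simp add: n_def)
  have aA: "a \<in> A" using insert.prems by simp
  define t where "t = 1 / (n + 1)"
  have t: "t \<in> \<rat>" "0 \<le> t" "t \<le> 1" using n unfolding t_def n_def by auto
  have "(1 - t) *\<^sub>R ((1 / n) *\<^sub>R sum id S) + t *\<^sub>R a \<in> A"
    using cv avgO aA t unfolding qconvex_def by blast
  moreover have "(1 - t) *\<^sub>R ((1 / n) *\<^sub>R sum id S) + t *\<^sub>R a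
      = (1 / real (card (insert a S))) *\<^sub>R sum id (insert a S)"
    using insert.hyps n by (simp add: n_def[symmetric] t_def field_simps scaleR_add_right)
  ultimately show ?case by simp
qed


context rdat begin

lemma face_char:
  assumes u: "u \<in> Qvecs" "\<forall>y\<in>Cham. u \<bullet> y \<ge> 0" and F: "F = {y\<in>Cham. u \<bullet> y = 0}"
    and g: "g \<in> Cham" "\<forall>d\<in>Delta. (\<forall>f\<in>F. d \<bullet> f = 0) \<longrightarrow> d \<bullet> g = 0"
  shows "g \<in> F"
proof -
  define J where "J = {d\<in>Delta. \<exists>f\<in>F. d \<bullet> f \<noteq> 0}"
  have Jfin: "finite J" using Delta_fin J_def by simp
  have "\<forall>d\<in>J. \<exists>f. f \<in> F \<and> d \<bullet> f \<noteq> 0" using J_def by blast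
  then obtain fd where fd: "\<And>d. d \<in> J \<Longrightarrow> fd d \<in> F \<and> d \<bullet> fd d \<noteq> 0" by metis
  define f0 where "f0 = (\<Sum>d\<in>J. fd d)"
  have fdC: "d \<in> J \<Longrightarrow> fd d \<in> Cham" for d using fd F by blast
  have f0Q: "f0 \<in> Qvecs" unfolding f0_def using fdC by (auto simp: Cham_iff intro!: Qvecs_sum)
  have f0e: "e \<bullet> f0 = (\<Sum>d\<in>J. e \<bullet> fd d)" for e unfolding f0_def by (simp add: inner_sum_right)
  have f0C: "f0 \<in> Cham" using f0Q fdC by (auto simp: Cham_iff f0e intro!: sum_nonneg)
  have uf0: "u \<bullet> f0 = 0" using fd F by (simp add: f0e)
  have f0F: "f0 \<in> F" using F f0C uf0 by simp
  have pos0: "d \<bullet> f0 > 0" if d: "d \<in> J" for d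
  proof -
    have "d \<bullet> fd d \<ge> 0" using fdC[OF d] d J_def by (auto simp: Cham_iff)
    hence gt: "d \<bullet> fd d > 0" using fd[OF d] by simp
    have "d \<bullet> fd d \<le> (\<Sum>e\<in>J. d \<bullet> fd e)"
      by (rule member_le_sum[OF d _ Jfin]) (use fdC d J_def in \<open>auto simp: Cham_iff\<close>)
    thus ?thesis using gt f0e by simp
  qed
  define M where "M = (\<Sum>d\<in>J. \<bar>d \<bullet> g\<bar> / (d \<bullet> f0))"
  define n :: nat where "n = nat \<lceil>M\<rceil> + 1"
  have n0: "real n > 0" by (simp add: n_def)
  have Mn: "M < real n" unfolding n_def by linarith
  define t where "t = 1 / real n"
  have tQ: "t \<in> \<rat>" and t0: "t > 0" using n0 by (auto simp: t_def)
  have gQ: "g \<in> Qvecs" using g by (simp add: Cham_iff)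
  have hC: "f0 - t *\<^sub>R g \<in> Cham"
    unfolding Cham_iff
  proof (intro conjI ballI)
    show "f0 - t *\<^sub>R g \<in> Qvecs" using f0Q gQ tQ by auto
  next
    fix d assume d: "d \<in> Delta"
    show "d \<bullet> (f0 - t *\<^sub>R g) \<ge> 0"
    proof (cases "d \<in> J")
      case False
      hence "\<forall>f\<in>F. d \<bullet> f = 0" using d J_def by blast
      hence "d \<bullet> f0 = 0" "d \<bullet> g = 0" using f0F g(2) d by auto
      thus ?thesis by (simp add: inner_diff_right)
    next
      case True
      have p: "d \<bullet> f0 > 0" using pos0 True .
      have "\<bar>d \<bullet> g\<bar> / (d \<bullet> f0) \<le> M"
        unfolding M_def by (rule member_le_sum[OF True _ Jfin]) (use pos0 in \<open>auto intro: divide_nonneg_pos\<close>)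
      hence "\<bar>d \<bullet> g\<bar> / (d \<bullet> f0) < real n" using Mn by simp
      hence "\<bar>d \<bullet> g\<bar> < real n * (d \<bullet> f0)" using p by (simp add: divide_less_eq)
      hence "t * \<bar>d \<bullet> g\<bar> < d \<bullet> f0" using n0 by (simp add: t_def field_simps)
      moreover have "t * (d \<bullet> g) \<le> t * \<bar>d \<bullet> g\<bar>" using t0 by simp
      ultimately show ?thesis by (simp add: inner_diff_right)
    qed
  qed
  have "u \<bullet> (f0 - t *\<^sub>R g) \<ge> 0" using u(2) hC by blast
  hence "u \<bullet> g \<le> 0" using uf0 t0 by (simp add: inner_diff_right mult_le_0_iff)
  moreover have "u \<bullet> g \<ge> 0" using u(2) g(1) by blast
  ultimately show ?thesis using F g(1) by simp
qed


lemma actL_diff_CS: "set L \<subseteq> Phi \<Longrightarrow> x \<in> Qvecs \<Longrightarrow>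
   \<exists>c. (\<forall>a. c a \<in> \<rat>) \<and> actL L x - x = (\<Sum>a\<in>Phi. c a *\<^sub>R cor a)"
proof (induction L)
  case Nil then show ?case by (intro exI[of _ "\<lambda>_. 0"]) simp
next
  case (Cons b L)
  then obtain c where c: "\<forall>a. c a \<in> \<rat>" "actL L x - x = (\<Sum>a\<in>Phi. c a *\<^sub>R cor a)" by auto
  have bP: "b \<in> Phi" using Cons.prems by simp
  define k where "k = b \<bullet> actL L x"
  have kQ: "k \<in> \<rat>" unfolding k_def using Cons.prems by (intro Qvecs_inner Phi_Q[OF bP] actL_Q) auto
  define c' where "c' a = c a - (if a = b then k else 0)" for a
  have "(\<Sum>a\<in>Phi. c' a *\<^sub>R cor a) = (\<Sum>a\<in>Phi. c a *\<^sub>R cor a) - (\<Sum>a\<in>Phi. (if a = b then k else 0) *\<^sub>R cor a)"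
    by (simp add: c'_def scaleR_diff_left sum_subtractf)
  also have "(\<Sum>a\<in>Phi. (if a = b then k else 0) *\<^sub>R cor a) = (\<Sum>a\<in>Phi. if a = b then k *\<^sub>R cor a else 0)"
    by (rule sum.cong) auto
  also have "\<dots> = k *\<^sub>R cor b" using bP Phi_fin by (simp add: sum.delta)
  finally have "(\<Sum>a\<in>Phi. c' a *\<^sub>R cor a) = actL (b # L) x - x"
    using c(2) by (simp add: sL_def refl_def k_def)
  moreover have "\<forall>a. c' a \<in> \<rat>" using c(1) kQ by (simp add: c'_def)
  ultimately show ?case by metis
qed

lemma orbit_inj:
  assumes L: "set L \<subseteq> Phi" and M: "set M \<subseteq> Phi" and x: "x \<in> Qvecs"
    and eq: "\<forall>a\<in>Phi. a \<bullet> actL L x = a \<bullet> actL M x"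
  shows "actL L x = actL M x"
proof -
  obtain c where c: "\<forall>a. c a \<in> \<rat>" "actL L x - x = (\<Sum>a\<in>Phi. c a *\<^sub>R cor a)"
    using actL_diff_CS[OF L x] by blast
  obtain c' where c': "\<forall>a. c' a \<in> \<rat>" "actL M x - x = (\<Sum>a\<in>Phi. c' a *\<^sub>R cor a)"
    using actL_diff_CS[OF M x] by blast
  define w where "w = actL L x - actL M x"
  have wQ: "w \<in> Qvecs" unfolding w_def using actL_Q L M x by auto
  have "w = (actL L x - x) - (actL M x - x)" by (simp add: w_def)
  also have "\<dots> = (\<Sum>a\<in>Phi. (c a - c' a) *\<^sub>R cor a)"
    using c c' by (simp add: scaleR_diff_left sum_subtractf)
  finally have w: "w = (\<Sum>a\<in>Phi. (c a - c' a) *\<^sub>R cor a)" .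
  have zero: "B w (cor a) = 0" if a: "a \<in> Phi" for a
  proof -
    have "a \<bullet> w = 0" using eq a by (simp add: w_def inner_diff_right)
    thus ?thesis using sign_root(2)[OF a wQ] by simp
  qed
  have "B w w = (\<Sum>a\<in>Phi. B w ((c a - c' a) *\<^sub>R cor a))"
    using Bsum2[of Phi "\<lambda>a. (c a - c' a) *\<^sub>R cor a" w] c(1) c'(1) cor_Q wQ w by auto
  also have "\<dots> = 0" using zero Bscale2 c(1) c'(1) cor_Q wQ by (auto intro!: sum.neutral)
  finally have "w = 0" using B_nondeg wQ by blast
  thus ?thesis by (simp add: w_def)
qed

lemma orbit_finite: assumes I: "I \<subseteq> Phi" and x: "x \<in> Qvecs"
  shows "finite ((\<lambda>L. actL L x) ` {L. set L \<subseteq> I})"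
proof -
  let ?O = "(\<lambda>L. actL L x) ` {L. set L \<subseteq> I}"
  define \<phi> where "\<phi> v = restrict (\<lambda>a. a \<bullet> v) Phi" for v :: "real^'n"
  have "inj_on \<phi> ?O"
  proof (rule inj_onI)
    fix v v' assume v: "v \<in> ?O" and v': "v' \<in> ?O" and e: "\<phi> v = \<phi> v'"
    obtain L where L: "set L \<subseteq> I" "v = actL L x" using v by blast
    obtain M where M: "set M \<subseteq> I" "v' = actL M x" using v' by blast
    have "\<forall>a\<in>Phi. a \<bullet> v = a \<bullet> v'" using e unfolding \<phi>_def by (metis restrict_apply')
    thus "v = v'" using orbit_inj[of L M x] L M I x by auto
  qed
  moreover have "\<phi> ` ?O \<subseteq> (\<Pi>\<^sub>E a\<in>Phi. (\<lambda>b. b \<bullet> x) ` Phi)"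
  proof
    fix f assume "f \<in> \<phi> ` ?O"
    then obtain L where L: "set L \<subseteq> I" "f = \<phi> (actL L x)" by blast
    have "a \<bullet> actL L x \<in> (\<lambda>b. b \<bullet> x) ` Phi" if a: "a \<in> Phi" for a
      using transpL[of a L x] actX_Phi[of "rev L" a] L I a by auto
    thus "f \<in> (\<Pi>\<^sub>E a\<in>Phi. (\<lambda>b. b \<bullet> x) ` Phi)" using L by (auto simp: \<phi>_def)
  qed
  moreover have "finite (\<Pi>\<^sub>E a\<in>Phi. (\<lambda>b. b \<bullet> x) ` Phi)" using Phi_fin by (simp add: finite_PiE)
  ultimately show ?thesis using inj_on_finite by blast
qed

lemma coef_keep: assumes M: "set M \<subseteq> Delta" and d: "d \<in> Delta" "d \<notin> set M"
  shows "actX M d \<in> Phi \<and> coef (actX M d) d = 1"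
  using M d
proof (induction M)
  case Nil then show ?case using coef_simple Delta_Phi by auto
next
  case (Cons e M)
  hence IH: "actX M d \<in> Phi" "coef (actX M d) d = 1" and e: "e \<in> Delta" "e \<noteq> d" by auto
  obtain k where k: "of_int k = actX M d \<bullet> cor e" using pair_int IH(1) e(1) Delta_Phi
    by (metis Ints_cases subsetD)
  have "coef (sX e (actX M d)) d = 1" using coef_sX[OF IH(1) e(1) k Cons.prems(2)] IH(2) e(2) by simp
  moreover have "sX e (actX M d) \<in> Phi" using sX_Phi IH(1) e(1) Delta_Phi by blast
  ultimately show ?case by simp
qed

lemma actL_fix: "(\<forall>d\<in>set L. d \<bullet> f = 0) \<Longrightarrow> actL L f = f"
  by (induction L) (auto simp: sL_def refl_def)

end



context rdat begin

lemma main: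
  assumes sup: "support \<Sigma> \<subseteq> Cham"
    and cv: "qconvex (support (W_fan (weyl_group Phi cor) \<Sigma>))"
    and x: "x \<in> support \<Sigma>" and face: "qface Cham F"
  shows "orth_proj B (qspan F) x \<in> support \<Sigma>"
proof -
  obtain u where u: "u \<in> Qvecs" "\<forall>y\<in>Cham. u \<bullet> y \<ge> 0" and F: "F = {y\<in>Cham. u \<bullet> y = 0}"
    using face unfolding qface_def by blast
  define I where "I = {d\<in>Delta. \<forall>f\<in>F. d \<bullet> f = 0}"
  have ID: "I \<subseteq> Delta" by (auto simp: I_def)
  have IP: "I \<subseteq> Phi" using ID Delta_Phi by blast
  have xC: "x \<in> Cham" using x sup by blast
  have xQ: "x \<in> Qvecs" using xC by (simp add: Cham_iff)
  define S where "S = (\<lambda>L. actL L x) ` {L. set L \<subseteq> I}"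
  have Sfin: "finite S" unfolding S_def using orbit_finite IP xQ by blast
  have xS: "x \<in> S" unfolding S_def by (rule image_eqI[of _ _ "[]"]) auto
  hence Sne: "S \<noteq> {}" by blast
  define N where "N = real (card S)"
  have N0: "N > 0" using Sfin Sne by (simp add: N_def card_gt_0_iff)
  define avg where "avg = (1 / N) *\<^sub>R sum id S"
  have SQ: "v \<in> Qvecs" if "v \<in> S" for v using that actL_Q IP xQ unfolding S_def by blast
  have avgQ: "avg \<in> Qvecs" unfolding avg_def using SQ by (auto simp: N_def intro!: Qvecs_scale Qvecs_sum)
  have "S \<subseteq> support (W_fan (weyl_group Phi cor) \<Sigma>)"
  proof
    fix v assume "v \<in> S"
    then obtain L where L: "set L \<subseteq> I" "v = actL L x" unfolding S_def by blast
    obtain \<sigma> where \<sigma>: "\<sigma> \<in> \<Sigma>" "x \<in> \<sigma>" using x unfolding support_def by blast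
    have "actL L ` \<sigma> \<in> W_fan (weyl_group Phi cor) \<Sigma>"
      unfolding W_fan_def using actL_W L IP \<sigma> by blast
    thus "v \<in> support (W_fan (weyl_group Phi cor) \<Sigma>)" unfolding support_def using L \<sigma> by blast
  qed
  hence avgW: "avg \<in> support (W_fan (weyl_group Phi cor) \<Sigma>)"
    unfolding avg_def N_def using qconvex_avg[OF cv Sfin Sne] by blast
  \<comment> \<open>invariance under simple reflections in I\<close>
  have avg_fix: "d \<bullet> avg = 0" if d: "d \<in> I" for d
  proof -
    have dP: "d \<in> Phi" using d IP by blast
    have img: "sL d ` S = S"
    proof
      show "sL d ` S \<subseteq> S"
      proof
        fix v assume "v \<in> sL d ` S"
        then obtain L where L: "set L \<subseteq> I" "v = sL d (actL L x)" unfolding S_def by blast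
        thus "v \<in> S" unfolding S_def using d by (intro image_eqI[of _ _ "d # L"]) auto
      qed
    next
      show "S \<subseteq> sL d ` S"
      proof
        fix v assume v: "v \<in> S"
        then obtain L where L: "set L \<subseteq> I" "v = actL L x" unfolding S_def by blast
        have "sL d v \<in> S" unfolding S_def using d L by (intro image_eqI[of _ _ "d # L"]) auto
        moreover have "v = sL d (sL d v)" using dP by simp
        ultimately show "v \<in> sL d ` S" by blast
      qed
    qed
    have inj: "inj_on (sL d) S" by (rule inj_onI) (metis sL_inv dP)
    have "sL d (sum id S) = (\<Sum>v\<in>S. sL d v)" using linear_sum[OF linear_sL[of d]] by simp
    also have "\<dots> = sum id (sL d ` S)" using sum.reindex[OF inj, of id] by simp
    also have "\<dots> = sum id S" using img by simp
    finally have "sL d avg = avg" unfolding avg_def using linear_scale[OF linear_sL[of d]] by simp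
    hence "(d \<bullet> avg) *\<^sub>R cor d = 0" by (simp add: sL_def refl_def)
    thus ?thesis using cor_nz dP by simp
  qed
  have avgC: "avg \<in> Cham"
    unfolding Cham_iff
  proof (intro conjI avgQ ballI)
    fix d assume d: "d \<in> Delta"
    show "d \<bullet> avg \<ge> 0"
    proof (cases "d \<in> I")
      case True then show ?thesis using avg_fix by simp
    next
      case False
      have "d \<bullet> v \<ge> 0" if v: "v \<in> S" for v
      proof -
        obtain L where L: "set L \<subseteq> I" "v = actL L x" using v unfolding S_def by blast
        have M: "set (rev L) \<subseteq> Delta" "d \<notin> set (rev L)" using L ID False by auto
        have b: "actX (rev L) d \<in> Phi" "coef (actX (rev L) d) d = 1" using coef_keep[OF M(1) d M(2)] by auto
        have "pos (actX (rev L) d)" using pos_if_coef[OF b(1) d] b(2) by simp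
        hence "actX (rev L) d \<bullet> x \<ge> 0" using pos_nonneg b(1) xC by blast
        thus ?thesis using L transpL by simp
      qed
      hence "(\<Sum>v\<in>S. d \<bullet> v) \<ge> 0" by (rule sum_nonneg)
      thus ?thesis unfolding avg_def using N0 by (simp add: inner_sum_right)
    qed
  qed
  have avgF: "avg \<in> F"
    by (rule face_char[OF u F avgC]) (use avg_fix ID in \<open>auto simp: I_def\<close>)
  have avgS: "avg \<in> support \<Sigma>"
  proof -
    obtain \<tau> where \<tau>: "\<tau> \<in> W_fan (weyl_group Phi cor) \<Sigma>" "avg \<in> \<tau>" using avgW unfolding support_def by blast
    then obtain w \<sigma> where w: "w \<in> weyl_group Phi cor" "\<sigma> \<in> \<Sigma>" "\<tau> = w ` \<sigma>" unfolding W_fan_def by blast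
    then obtain y where y: "y \<in> \<sigma>" "avg = w y" using \<tau> by blast
    have yC: "y \<in> Cham" using y w sup unfolding support_def by blast
    have "w y = y" using dominance[OF w(1) yC] y avgC by simp
    thus ?thesis using y w unfolding support_def by auto
  qed
  have orth: "B x f = B avg f" if f: "f \<in> F" for f
  proof -
    have fQ: "f \<in> Qvecs" using f F by (auto simp: Cham_iff)
    have each: "B v f = B x f" if v: "v \<in> S" for v
    proof -
      obtain L where L: "set L \<subseteq> I" "v = actL L x" using v unfolding S_def by blast
      have "actL L f = f" using L f by (intro actL_fix) (auto simp: I_def)
      thus ?thesis using actL_B[of L x f] L IP xQ fQ by auto
    qed
    have "B avg f = (1 / N) * B (sum id S) f" unfolding avg_def
      using Bscale[of "1/N" "sum id S" f] SQ fQ by (auto simp: N_def intro!: Qvecs_sum)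
    also have "B (sum id S) f = (\<Sum>v\<in>S. B v f)" using Bsum[of S id f] SQ fQ by simp
    also have "\<dots> = N * B x f" using each by (simp add: N_def)
    finally show ?thesis using N0 by simp
  qed
  have qspanQ: "v \<in> Qvecs" if "v \<in> qspan F" for v
  proof -
    have "\<exists>T c. finite T \<and> T \<subseteq> F \<and> (\<forall>t\<in>T. c t \<in> \<rat>) \<and> v = (\<Sum>t\<in>T. c t *\<^sub>R t)"
      using that by (simp add: qspan_def)
    then obtain T c where T: "finite T" "T \<subseteq> F" "\<forall>t\<in>T. c t \<in> \<rat>" "v = (\<Sum>t\<in>T. c t *\<^sub>R t)"
      by blast
    have FQ: "\<And>t. t \<in> F \<Longrightarrow> t \<in> Qvecs" using F by (auto simp: Cham_iff)
    have cQ: "\<And>t. t \<in> T \<Longrightarrow> c t *\<^sub>R t \<in> Qvecs" using T(2,3) FQ Qvecs_scale by blast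
    show ?thesis unfolding T(4) using cQ by (rule Qvecs_sum)
  qed
  have perp: "B (x - avg) v = 0" if "v \<in> qspan F" for v
  proof -
    have "\<exists>T c. finite T \<and> T \<subseteq> F \<and> (\<forall>t\<in>T. c t \<in> \<rat>) \<and> v = (\<Sum>t\<in>T. c t *\<^sub>R t)"
      using that by (simp add: qspan_def)
    then obtain T c where T: "finite T" "T \<subseteq> F" "\<forall>t\<in>T. c t \<in> \<rat>" "v = (\<Sum>t\<in>T. c t *\<^sub>R t)"
      by blast
    have FQ: "\<And>t. t \<in> F \<Longrightarrow> t \<in> Qvecs" using F by (auto simp: Cham_iff)
    have TQ: "\<And>t. t \<in> T \<Longrightarrow> t \<in> Qvecs" using T(2) FQ by blast
    have cQ: "\<And>t. t \<in> T \<Longrightarrow> c t *\<^sub>R t \<in> Qvecs" using T(3) TQ Qvecs_scale by blast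
    have xa: "x - avg \<in> Qvecs" using xQ avgQ by blast
    have "B (x - avg) v = (\<Sum>t\<in>T. B (x - avg) (c t *\<^sub>R t))"
      unfolding T(4) by (rule Bsum2[OF cQ xa])
    also have "\<dots> = 0"
    proof (rule sum.neutral, rule ballI)
      fix t assume t: "t \<in> T"
      have "B (x - avg) (c t *\<^sub>R t) = c t * B (x - avg) t" using Bscale2 T(3) t TQ xa by blast
      also have "B (x - avg) t = B x t - B avg t" using Bdiff xQ avgQ TQ t by blast
      also have "\<dots> = 0" using orth T(2) t by auto
      finally show "B (x - avg) (c t *\<^sub>R t) = 0" by simp
    qed
    finally show ?thesis .
  qed
  have avg_span: "avg \<in> qspan F"
    unfolding qspan_def using avgF by (intro CollectI exI[of _ "{avg}"] exI[of _ "\<lambda>_. 1"]) auto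
  have "orth_proj B (qspan F) x = avg"
    unfolding orth_proj_def
  proof (rule the_equality)
    show "avg \<in> qspan F \<and> (\<forall>v\<in>qspan F. B (x - avg) v = 0)" using avg_span perp by blast
  next
    fix p assume p: "p \<in> qspan F \<and> (\<forall>v\<in>qspan F. B (x - p) v = 0)"
    have pQ: "p \<in> Qvecs" using p qspanQ by blast
    have h: "B (avg - p) z = 0" if z: "z \<in> qspan F" for z
    proof -
      have zQ: "z \<in> Qvecs" using z qspanQ by blast
      have "avg - p = (x - p) - (x - avg)" by simp
      hence "B (avg - p) z = B (x - p) z - B (x - avg) z"
        using Bdiff[of "x - p" "x - avg" z] xQ pQ avgQ zQ by auto
      thus ?thesis using p perp z by simp
    qed
    have "B (avg - p) (avg - p) = B (avg - p) avg - B (avg - p) p"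
      using Bdiff2 avgQ pQ by auto
    also have "\<dots> = 0" using h avg_span p by simp
    finally have "B (avg - p) (avg - p) = 0" .
    moreover have "avg - p \<in> Qvecs" using avgQ pQ by blast
    ultimately have "avg - p = 0" using B_nondeg by blast
    thus "p = avg" by simp
  qed
  thus ?thesis using avgS by simp
qed

end

theorem lemma7p4:
  fixes Phi Delta :: "(real ^ 'n) set"
    and cor :: "real ^ 'n \<Rightarrow> real ^ 'n"
    and B :: "real ^ 'n \<Rightarrow> real ^ 'n \<Rightarrow> real"
    and \<Sigma> :: "(real ^ 'n) set set"
    and x :: "real ^ 'n"
    and F :: "(real ^ 'n) set"
  assumes "reduced_root_datum Phi cor"
    and "is_base Phi Delta"
    and "Q_inner_product B"
    and "W_invariant (weyl_group Phi cor) B"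
    and "is_fan \<Sigma>"
    and "support \<Sigma> \<subseteq> pos_chamber Delta"
    and "qconvex (support (W_fan (weyl_group Phi cor) \<Sigma>))"
    and "x \<in> support \<Sigma>"
    and "qface (pos_chamber Delta) F"
  shows "orth_proj B (qspan F) x \<in> support \<Sigma>"
proof -
  interpret rdat Phi Delta cor B using assms(1-4) by unfold_locales
  show ?thesis using main[of \<Sigma> x F] assms(6-9) by (simp add: Cham_def)
qed


end
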